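(* Let $T$ be a rooted tree whose vertices are identified with their preorder labels, and let $u_1,\dots,u_k,v_1,\dots,v_k$ be vertices of $T$ with $u_i\le v_i$ for all $i$. Then $$\mathrm{LCA}(\mathrm{LCA}(u_1,v_1),\mathrm{LCA}(u_2,v_2),\dots,\mathrm{LCA}(u_k,v_k))=\mathrm{LCA}(\min_i u_i,\max_i v_i).$$
   Context: A preorder labeling of $T$: the root receives label $1$; whenever a vertex receives label $\ell$, its children are ordered arbitrarily as $c_1,\dots,c_k$ and child $c_i$ receives label $\ell+1+\sum_{j<i}\#\mathrm{desc}(c_j)$, where $\#\mathrm{desc}(c)$ is the number of descendants of $c$ (including $c$). Vertices are identified with their labels, and $\le$, $\min$, $\max$ refer to labels. Every vertex is an ancestor of itself. $\mathrm{LCA}(w_1,w_2,\dots)$ denotes the lowest common ancestor in $T$: a common ancestor of all $w_i$ such that no strict descendant of it is a common ancestor of all $w_i$. *)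

theory Defs
  imports Main
begin

text \<open>A rooted tree on a finite vertex set V of natural numbers, given by a parent
function p with root r: the root is its own parent (a sentinel), every other vertex
has its parent in V, and every vertex reaches the root by iterating p.\<close>
definition rooted_tree :: "nat set \<Rightarrow> nat \<Rightarrow> (nat \<Rightarrow> nat) \<Rightarrow> bool" where
  "rooted_tree V r p \<longleftrightarrow> finite V \<and> r \<in> V \<and> p r = r \<and> (\<forall>v\<in>V. p v \<in> V)
     \<and> (\<forall>v\<in>V. \<exists>k. (p ^^ k) v = r)"

definition is_anc :: "(nat \<Rightarrow> nat) \<Rightarrow> nat \<Rightarrow> nat \<Rightarrow> bool" where
  "is_anc p a v \<longleftrightarrow> (\<exists>k. (p ^^ k) v = a)"

definition desc :: "nat set \<Rightarrow> (nat \<Rightarrow> nat) \<Rightarrow> nat \<Rightarrow> nat set" where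
  "desc V p v = {w \<in> V. is_anc p v w}"

definition children :: "nat set \<Rightarrow> (nat \<Rightarrow> nat) \<Rightarrow> nat \<Rightarrow> nat set" where
  "children V p v = {w \<in> V. w \<noteq> v \<and> p w = v}"

text \<open>The vertices (= labels) form a preorder labeling: root is 1, and the children of
each vertex v can be ordered c_1,...,c_k so that c_i = v + 1 + sum_{j<i} #desc(c_j).\<close>
definition preorder_tree :: "nat set \<Rightarrow> (nat \<Rightarrow> nat) \<Rightarrow> bool" where
  "preorder_tree V p \<longleftrightarrow> rooted_tree V 1 p \<and>
     (\<forall>v\<in>V. \<exists>cs. distinct cs \<and> set cs = children V p v \<and>
        (\<forall>i<length cs. cs ! i = v + 1 + (\<Sum>j<i. card (desc V p (cs ! j)))))"

definition is_lca :: "nat set \<Rightarrow> (nat \<Rightarrow> nat) \<Rightarrow> nat set \<Rightarrow> nat \<Rightarrow> bool" where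
  "is_lca V p W x \<longleftrightarrow> x \<in> V \<and> (\<forall>w\<in>W. is_anc p x w) \<and>
     (\<forall>y\<in>V. (\<forall>w\<in>W. is_anc p y w) \<and> is_anc p x y \<longrightarrow> y = x)"

definition lca :: "nat set \<Rightarrow> (nat \<Rightarrow> nat) \<Rightarrow> nat set \<Rightarrow> nat" where
  "lca V p W = (THE x. is_lca V p W x)"

end

theory Submission
  imports Defs
begin

lemma iter_in_V:
  assumes "rooted_tree V r p" "v \<in> V" shows "(p ^^ k) v \<in> V"
  using assms by (induction k) (auto simp: rooted_tree_def)

lemma p_less:
  assumes pt: "preorder_tree V p" and xV: "x \<in> V" and x1: "x \<noteq> 1"
  shows "p x < x"
proof -
  have rt: "rooted_tree V 1 p" using pt by (simp add: preorder_tree_def)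
  have pxV: "p x \<in> V" using rt xV by (simp add: rooted_tree_def)
  have "p x \<noteq> x"
  proof
    assume px: "p x = x"
    have "(p ^^ k) x = x" for k by (induction k) (simp_all add: px)
    moreover obtain k where "(p ^^ k) x = 1" using rt xV by (auto simp: rooted_tree_def)
    ultimately show False using x1 by simp
  qed
  hence xc: "x \<in> children V p (p x)" using xV by (auto simp: children_def)
  obtain cs where cs: "set cs = children V p (p x)"
     "\<forall>i<length cs. cs ! i = p x + 1 + (\<Sum>j<i. card (desc V p (cs ! j)))"
    using pt pxV unfolding preorder_tree_def by blast
  have "x \<in> set cs" using xc cs(1) by simp
  then obtain i where i: "i < length cs" "cs ! i = x" by (auto simp: in_set_conv_nth)
  have "cs ! i = p x + 1 + (\<Sum>j<i. card (desc V p (cs ! j)))" using cs(2) i(1) by blast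
  then show ?thesis using i(2) by linarith
qed

lemma p_le:
  assumes pt: "preorder_tree V p" and xV: "x \<in> V" shows "p x \<le> x"
proof (cases "x = 1")
  case True then show ?thesis using pt by (simp add: preorder_tree_def rooted_tree_def)
next
  case False then show ?thesis using p_less[OF pt xV] by simp
qed

lemma anc_le:
  assumes pt: "preorder_tree V p" and wV: "w \<in> V" and a: "is_anc p a w"
  shows "a \<le> w"
proof -
  have rt: "rooted_tree V 1 p" using pt by (simp add: preorder_tree_def)
  obtain k where k: "(p ^^ k) w = a" using a by (auto simp: is_anc_def)
  have "(p ^^ k) w \<le> w"
  proof (induction k)
    case 0 then show ?case by simp
  next
    case (Suc k)
    have "(p ^^ Suc k) w = p ((p ^^ k) w)" by simp
    also have "\<dots> \<le> (p ^^ k) w" using p_le[OF pt iter_in_V[OF rt wV]] by simp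
    finally show ?case using Suc by simp
  qed
  then show ?thesis using k by simp
qed

lemma anc_in_V:
  assumes pt: "preorder_tree V p" and wV: "w \<in> V" and a: "is_anc p a w"
  shows "a \<in> V"
  using a iter_in_V[of V 1 p w] pt wV by (auto simp: is_anc_def preorder_tree_def)

lemma anc_trans:
  assumes "is_anc p a b" "is_anc p b c" shows "is_anc p a c"
proof -
  obtain i j where "(p ^^ i) b = a" "(p ^^ j) c = b" using assms by (auto simp: is_anc_def)
  then have "(p ^^ (i + j)) c = a" by (simp add: funpow_add)
  then show ?thesis by (auto simp: is_anc_def)
qed

lemma anc_refl: "is_anc p a a"
  unfolding is_anc_def by (rule exI[of _ 0]) simp

lemma anc_chain:
  assumes "is_anc p a w" "is_anc p b w" shows "is_anc p a b \<or> is_anc p b a"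
proof -
  obtain i j where ij: "(p ^^ i) w = a" "(p ^^ j) w = b" using assms by (auto simp: is_anc_def)
  show ?thesis
  proof (cases "i \<le> j")
    case True
    then have "(p ^^ (j - i)) ((p ^^ i) w) = (p ^^ j) w"
      by (metis funpow_add le_add_diff_inverse2 comp_apply)
    then show ?thesis using ij by (auto simp: is_anc_def)
  next
    case False
    then have "(p ^^ (i - j)) ((p ^^ j) w) = (p ^^ i) w"
      by (metis funpow_add le_add_diff_inverse2 comp_apply nat_le_linear)
    then show ?thesis using ij by (auto simp: is_anc_def)
  qed
qed

lemma desc_decomp:
  assumes pt: "preorder_tree V p" and vV: "v \<in> V"
  shows "desc V p v = insert v (\<Union>c\<in>children V p v. desc V p c)"
proof
  have rt: "rooted_tree V 1 p" using pt by (simp add: preorder_tree_def)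
  have key: "\<And>w. w \<in> V \<Longrightarrow> (p ^^ k) w = v \<Longrightarrow> w = v \<or> (\<exists>c\<in>children V p v. is_anc p c w)" for k
  proof (induction k)
    case 0 then show ?case by simp
  next
    case (Suc k)
    have pw: "p w \<in> V" using Suc.prems rt by (simp add: rooted_tree_def)
    have "(p ^^ k) (p w) = v" using Suc.prems by (simp add: funpow_Suc_right del: funpow.simps)
    from Suc.IH[OF pw this] show ?case
    proof
      assume "p w = v"
      then show ?thesis using Suc.prems(1) by (cases "w = v") (auto simp: children_def anc_refl)
    next
      assume "\<exists>c\<in>children V p v. is_anc p c (p w)"
      then obtain c where c: "c \<in> children V p v" "is_anc p c (p w)" by blast
      have "is_anc p (p w) w" unfolding is_anc_def by (rule exI[of _ 1]) simp
      then show ?thesis using c anc_trans by blast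
    qed
  qed
  show "desc V p v \<subseteq> insert v (\<Union>c\<in>children V p v. desc V p c)"
  proof
    fix w assume "w \<in> desc V p v"
    then obtain k where "w \<in> V" "(p ^^ k) w = v" by (auto simp: desc_def is_anc_def)
    from key[OF this] show "w \<in> insert v (\<Union>c\<in>children V p v. desc V p c)"
      using \<open>w \<in> V\<close> by (auto simp: desc_def)
  qed
next
  show "insert v (\<Union>c\<in>children V p v. desc V p c) \<subseteq> desc V p v"
  proof
    fix w assume w: "w \<in> insert v (\<Union>c\<in>children V p v. desc V p c)"
    show "w \<in> desc V p v"
    proof (cases "w = v")
      case True then show ?thesis using vV by (simp add: desc_def anc_refl)
    next
      case False
      then obtain c where c: "c \<in> children V p v" "w \<in> desc V p c" using w by auto
      have "is_anc p v c" unfolding is_anc_def using c(1)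
        by (intro exI[of _ 1]) (simp add: children_def)
      then show ?thesis using c(2) anc_trans by (auto simp: desc_def)
    qed
  qed
qed

lemma tiling:
  "(\<Union>i<(n::nat). {b + (\<Sum>j<i. d j)..<b + (\<Sum>j<i. d j) + d i}) = {b..<b + (\<Sum>j<n. (d j::nat))}"
proof (induction n)
  case 0 then show ?case by simp
next
  case (Suc n)
  have "(\<Union>i<Suc n. {b + (\<Sum>j<i. d j)..<b + (\<Sum>j<i. d j) + d i})
     = {b..<b + (\<Sum>j<n. d j)} \<union> {b + (\<Sum>j<n. d j)..<b + (\<Sum>j<n. d j) + d n}"
    using Suc by (simp add: lessThan_Suc Un_commute)
  also have "\<dots> = {b..<b + (\<Sum>j<Suc n. d j)}" by auto
  finally show ?case .
qed

lemma desc_interval: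
  assumes pt: "preorder_tree V p"
  shows "v \<in> V \<Longrightarrow> desc V p v = {v..<v + card (desc V p v)}"
proof (induction "Max V - v" arbitrary: v rule: less_induct)
  case less
  have rt: "rooted_tree V 1 p" using pt by (simp add: preorder_tree_def)
  have fin: "finite V" using rt by (simp add: rooted_tree_def)
  obtain cs where cs: "set cs = children V p v"
     "\<forall>i<length cs. cs ! i = v + 1 + (\<Sum>j<i. card (desc V p (cs ! j)))"
    using pt less.prems unfolding preorder_tree_def by blast
  define d where "d j = card (desc V p (cs ! j))" for j
  have IH: "desc V p (cs ! i) = {v + 1 + (\<Sum>j<i. d j)..<v + 1 + (\<Sum>j<i. d j) + d i}"
    if i: "i < length cs" for i
  proof -
    have cV: "cs ! i \<in> V" using cs(1) i nth_mem by (fastforce simp: children_def)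
    have "cs ! i \<le> Max V" using fin cV by simp
    moreover have "v < cs ! i" using cs(2)[rule_format, OF i] by linarith
    ultimately have "Max V - cs ! i < Max V - v" by simp
    from less.hyps[OF this cV] have H: "desc V p (cs ! i) = {cs ! i..<cs ! i + d i}"
      unfolding d_def .
    have e: "cs ! i = v + 1 + (\<Sum>j<i. d j)" using cs(2)[rule_format, OF i] unfolding d_def .
    show ?thesis unfolding e[symmetric] by (rule H)
  qed
  have "desc V p v = insert v (\<Union>c\<in>set cs. desc V p c)"
    using desc_decomp[OF pt less.prems] cs(1) by simp
  also have "(\<Union>c\<in>set cs. desc V p c) = (\<Union>i<length cs. desc V p (cs ! i))"
    by (auto simp: in_set_conv_nth) (use nth_mem in blast)
  also have "\<dots> = (\<Union>i<length cs. {v + 1 + (\<Sum>j<i. d j)..<v + 1 + (\<Sum>j<i. d j) + d i})"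
    by (rule SUP_cong[OF refl]) (simp add: IH)
  also have "\<dots> = {v + 1..<v + 1 + (\<Sum>j<length cs. d j)}" by (rule tiling)
  finally have D0: "desc V p v = insert v {v + 1..<v + 1 + (\<Sum>j<length cs. d j)}" .
  have "insert v {v + 1..<v + 1 + (\<Sum>j<length cs. d j)} = {v..<v + 1 + (\<Sum>j<length cs. d j)}"
    by (rule set_eqI) (simp, linarith)
  with D0 have D: "desc V p v = {v..<v + 1 + (\<Sum>j<length cs. d j)}" by simp
  then have "card (desc V p v) = 1 + (\<Sum>j<length cs. d j)" by simp
  then show ?case using D by simp
qed

lemma convex:
  assumes pt: "preorder_tree V p" and aV: "a \<in> V" and yV: "y \<in> V"
    and x: "is_anc p a x" "x \<in> V" and z: "is_anc p a z" "z \<in> V"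
    and "x \<le> y" "y \<le> z"
  shows "is_anc p a y"
proof -
  have "x \<in> desc V p a" "z \<in> desc V p a" using x z by (auto simp: desc_def)
  moreover obtain e where "desc V p a = {a..<e}" using desc_interval[OF pt aV] by blast
  ultimately have "y \<in> desc V p a" using assms(8,9) by auto
  then show ?thesis by (simp add: desc_def)
qed

lemma lca_exists:
  assumes pt: "preorder_tree V p" and W: "W \<subseteq> V" "W \<noteq> {}"
  shows "is_lca V p W (lca V p W)"
proof -
  have rt: "rooted_tree V 1 p" using pt by (simp add: preorder_tree_def)
  define CA where "CA = {a \<in> V. \<forall>w\<in>W. is_anc p a w}"
  have oneV: "1 \<in> V" using rt by (simp add: rooted_tree_def)
  have "is_anc p 1 w" if "w \<in> W" for w
  proof -
    have "w \<in> V" using that W by blast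
    then obtain k where "(p ^^ k) w = 1" using rt unfolding rooted_tree_def by blast
    then show ?thesis unfolding is_anc_def by blast
  qed
  then have "1 \<in> CA" using oneV unfolding CA_def by blast
  moreover have fin: "finite CA"
  proof -
    have "finite V" using rt by (simp add: rooted_tree_def)
    moreover have "CA \<subseteq> V" unfolding CA_def by blast
    ultimately show ?thesis by (rule finite_subset[rotated])
  qed
  ultimately have M1: "Max CA \<in> CA" using Max_in by blast
  have M2: "y \<le> Max CA" if "y \<in> CA" for y using fin that by (rule Max_ge)
  have MV: "Max CA \<in> V" and MA: "\<forall>w\<in>W. is_anc p (Max CA) w"
    using M1 unfolding CA_def by blast+
  have ex: "is_lca V p W (Max CA)"
    unfolding is_lca_def
  proof (intro conjI ballI impI)
    show "Max CA \<in> V" by (rule MV)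
    show "is_anc p (Max CA) w" if "w \<in> W" for w using MA that by blast
    fix y assume y: "y \<in> V" "(\<forall>w\<in>W. is_anc p y w) \<and> is_anc p (Max CA) y"
    then have "y \<in> CA" unfolding CA_def by blast
    then have "y \<le> Max CA" by (rule M2)
    moreover have "Max CA \<le> y" using anc_le[OF pt] y by blast
    ultimately show "y = Max CA" by simp
  qed
  have uniq: "x = Max CA" if x: "is_lca V p W x" for x
  proof -
    obtain w where w: "w \<in> W" using W by blast
    have "is_anc p x w" using x w unfolding is_lca_def by blast
    moreover have "is_anc p (Max CA) w" using MA w by blast
    ultimately have "is_anc p x (Max CA) \<or> is_anc p (Max CA) x" by (rule anc_chain)
    then show ?thesis
    proof
      assume "is_anc p x (Max CA)"
      then show ?thesis using x MV MA unfolding is_lca_def by blast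
    next
      assume "is_anc p (Max CA) x"
      then show ?thesis using ex x unfolding is_lca_def by blast
    qed
  qed
  have "lca V p W = Max CA" unfolding lca_def using ex uniq by (rule the_equality)
  then show ?thesis using ex by simp
qed

lemma anc_lca2:
  assumes pt: "preorder_tree V p" and "a \<in> V" "b \<in> V" "y \<in> V"
  shows "is_anc p y (lca V p {a, b}) \<longleftrightarrow> is_anc p y a \<and> is_anc p y b"
proof -
  let ?l = "lca V p {a, b}"
  have L: "is_lca V p {a, b} ?l" using lca_exists[OF pt] assms by simp
  show ?thesis
  proof
    assume "is_anc p y ?l"
    then show "is_anc p y a \<and> is_anc p y b" using L anc_trans unfolding is_lca_def by blast
  next
    assume h: "is_anc p y a \<and> is_anc p y b"
    have "is_anc p ?l a" using L unfolding is_lca_def by auto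
    then have "is_anc p y ?l \<or> is_anc p ?l y" using h anc_chain by blast
    then show "is_anc p y ?l"
    proof
      assume "is_anc p ?l y"
      then have "y = ?l" using L h assms(4) unfolding is_lca_def by auto
      then show ?thesis by (simp add: anc_refl)
    qed
  qed
qed

theorem corollary5p4:
  fixes V :: "nat set" and p :: "nat \<Rightarrow> nat" and k :: nat and u v :: "nat \<Rightarrow> nat"
  assumes "preorder_tree V p"
    and "k \<ge> 1"
    and "\<forall>i\<in>{1..k}. u i \<in> V \<and> v i \<in> V \<and> u i \<le> v i"
  shows "lca V p ((\<lambda>i. lca V p {u i, v i}) ` {1..k})
         = lca V p {Min (u ` {1..k}), Max (v ` {1..k})}"
proof -
  note pt = assms(1)
  let ?S = "(\<lambda>i. lca V p {u i, v i}) ` {1..k}"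
  let ?m = "Min (u ` {1..k})" and ?M = "Max (v ` {1..k})"
  have ne: "{1..k} \<noteq> {}" using assms(2) by simp
  have mI: "?m \<in> u ` {1..k}" using ne by simp
  have MI: "?M \<in> v ` {1..k}" using ne by simp
  have mle: "?m \<le> u i" if "i \<in> {1..k}" for i using that by simp
  have Mge: "v i \<le> ?M" if "i \<in> {1..k}" for i using that by simp
  have mV: "?m \<in> V" using mI assms(3) by auto
  have MV: "?M \<in> V" using MI assms(3) by auto
  have eqv: "(\<forall>w\<in>?S. is_anc p y w) \<longleftrightarrow> (\<forall>w\<in>{?m, ?M}. is_anc p y w)" if yV: "y \<in> V" for y
  proof -
    have "(\<forall>w\<in>?S. is_anc p y w) \<longleftrightarrow> (\<forall>i\<in>{1..k}. is_anc p y (u i) \<and> is_anc p y (v i))"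
      using anc_lca2[OF pt _ _ yV] assms(3) by auto
    also have "\<dots> \<longleftrightarrow> (\<forall>w\<in>{?m, ?M}. is_anc p y w)"
    proof
      assume "\<forall>i\<in>{1..k}. is_anc p y (u i) \<and> is_anc p y (v i)"
      then show "\<forall>w\<in>{?m, ?M}. is_anc p y w" using mI MI by auto
    next
      assume h: "\<forall>w\<in>{?m, ?M}. is_anc p y w"
      show "\<forall>i\<in>{1..k}. is_anc p y (u i) \<and> is_anc p y (v i)"
      proof
        fix i assume i: "i \<in> {1..k}"
        have ui: "u i \<in> V" "v i \<in> V" "u i \<le> v i" using assms(3) i by auto
        show "is_anc p y (u i) \<and> is_anc p y (v i)"
          using convex[OF pt yV ui(1) _ mV _ MV] convex[OF pt yV ui(2) _ mV _ MV]
            h mle[OF i] Mge[OF i] ui(3) by auto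
      qed
    qed
    finally show ?thesis .
  qed
  have "is_lca V p ?S = is_lca V p {?m, ?M}"
    using eqv by (auto simp: is_lca_def fun_eq_iff)
  then show ?thesis by (simp add: lca_def)
qed

end
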